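(* Let $1\le k\le n$. For any matrices $\mathcal{A}\in\Gamma_k$ and $\mathcal{B}\in\Gamma_k^*$ (in $\mathbb{S}^n$), $$\rho_k(\mathcal{A})\,\rho_k^*(\mathcal{B})\le \frac1n\,\mathcal{A}\cdot\mathcal{B},$$ where $\mathcal{A}\cdot\mathcal{B}=\sum_{i,j}a_{ij}b_{ij}=\operatorname{tr}(\mathcal{A}\mathcal{B})$.
   Context: $\mathbb{S}^n$ is the space of real symmetric $n\times n$ matrices. For $\lambda\in\mathbb{R}^n$, $\mathcal{S}_k(\lambda)=\sum_{i_1<\dots<i_k}\lambda_{i_1}\cdots\lambda_{i_k}$. $\Gamma_k=\{\lambda\in\mathbb{R}^n:\mathcal{S}_j(\lambda)>0,\ j=1,\dots,k\}$ and $\Gamma_k^*=\{\lambda\in\mathbb{R}^n:\lambda\cdot\mu\ge0\ \forall\mu\in\Gamma_k\}$. On $\Gamma_k$, $\rho_k(\lambda)=\big(\mathcal{S}_k(\lambda)/\binom nk\big)^{1/k}$; on $\Gamma_k^*$, $\rho_k^*(\lambda)=\inf\{\lambda\cdot\mu/n:\mu\in\Gamma_k,\ \rho_k(\mu)\ge1\}$. A matrix belongs to $\Gamma_k$ (resp. $\Gamma_k^*$) if its vector of eigenvalues does, and $\rho_k(\mathcal{A})$, $\rho_k^*(\mathcal{B})$ are evaluated at the eigenvalue vectors. *)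

theory Defs
  imports "Jordan_Normal_Form.Char_Poly"
begin

definition sym_mats :: "nat \<Rightarrow> real mat set" where
  "sym_mats n = {A. A \<in> carrier_mat n n \<and> transpose_mat A = A}"

definition eigenvalue_vector :: "real mat \<Rightarrow> real vec \<Rightarrow> bool" where
  "eigenvalue_vector A lam \<longleftrightarrow> dim_vec lam = dim_row A \<and>
     char_poly A = (\<Prod>i<dim_vec lam. [:- (lam $ i), 1:])"

definition elem_sym :: "nat \<Rightarrow> real vec \<Rightarrow> real" where
  "elem_sym k lam = (\<Sum>I \<in> {I. I \<subseteq> {0..<dim_vec lam} \<and> card I = k}. \<Prod>i\<in>I. lam $ i)"

definition Gamma :: "nat \<Rightarrow> nat \<Rightarrow> real vec set" where
  "Gamma n k = {lam \<in> carrier_vec n. \<forall>j\<in>{1..k}. elem_sym j lam > 0}"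

definition Gamma_dual :: "nat \<Rightarrow> nat \<Rightarrow> real vec set" where
  "Gamma_dual n k = {lam \<in> carrier_vec n. \<forall>mu\<in>Gamma n k. lam \<bullet> mu \<ge> 0}"

definition rho :: "nat \<Rightarrow> real vec \<Rightarrow> real" where
  "rho k lam = root k (elem_sym k lam / real (dim_vec lam choose k))"

definition rho_dual :: "nat \<Rightarrow> real vec \<Rightarrow> real" where
  "rho_dual k lam = Inf {(lam \<bullet> mu) / real (dim_vec lam) | mu.
       mu \<in> Gamma (dim_vec lam) k \<and> rho k mu \<ge> 1}"

definition mat_dot :: "real mat \<Rightarrow> real mat \<Rightarrow> real" where
  "mat_dot A B = (\<Sum>i<dim_row A. \<Sum>j<dim_col A. A $$ (i, j) * B $$ (i, j))"

end

theory Submission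
  imports Defs
begin


lemma self_sprod_real: fixes v :: "real vec" shows "v \<bullet> v = (\<Sum>i<dim_vec v. (v$i)^2)"
  unfolding scalar_prod_def by (rule sum.cong, auto simp: power2_eq_square)

lemma self_sprod_nonneg: fixes v :: "real vec" shows "v \<bullet> v \<ge> 0"
  unfolding self_sprod_real by (rule sum_nonneg, auto)

lemma self_sprod_zero: fixes v :: "real vec" assumes "v \<in> carrier_vec n" "v \<bullet> v = 0"
  shows "v = 0\<^sub>v n"
proof -
  have "\<forall>i\<in>{..<dim_vec v}. (v$i)^2 = 0"
    using assms(2) unfolding self_sprod_real by (subst sum_nonneg_eq_0_iff[symmetric], auto)
  thus ?thesis using assms(1) by (intro eq_vecI, auto)
qed

lemma sum_delta_l: "i < (n::nat) \<Longrightarrow> (\<Sum>k<n. (if i = k then 1 else 0) * f k) = (f i :: real)"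
proof -
  assume i: "i < n"
  have "(\<Sum>k<n. (if i = k then 1 else 0) * f k) = (\<Sum>k<n. if k = i then f k else 0)"
    by (rule sum.cong) auto
  also have "\<dots> = f i" using i by (subst sum.delta) auto
  finally show ?thesis .
qed

lemma sum_delta_r: "i < (n::nat) \<Longrightarrow> (\<Sum>k<n. f k * (if k = i then 1 else 0)) = (f i :: real)"
proof -
  assume i: "i < n"
  have "(\<Sum>k<n. f k * (if k = i then 1 else 0)) = (\<Sum>k<n. if k = i then f k else 0)"
    by (rule sum.cong) auto
  also have "\<dots> = f i" using i by (subst sum.delta) auto
  finally show ?thesis .
qed

definition hh :: "nat \<Rightarrow> real vec \<Rightarrow> real mat" where
  "hh n w = mat n n (\<lambda>(i,j). (if i = j then 1 else 0) - 2 / (w \<bullet> w) * w$i * w$j)"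

lemma hh_carrier: "hh n w \<in> carrier_mat n n" unfolding hh_def by auto

lemma hh_sym: "transpose_mat (hh n w) = hh n w" unfolding hh_def by (intro eq_matI, auto)

lemma hh_sq: assumes w: "w \<in> carrier_vec n" shows "hh n w * hh n w = 1\<^sub>m n"
proof (intro eq_matI)
  fix i j assume i: "i < dim_row (1\<^sub>m n)" and j: "j < dim_col (1\<^sub>m n)"
  hence i: "i < n" and j: "j < n" by auto
  define c where "c = 2 / (w \<bullet> w)"
  define d where "d = (\<lambda>i j::nat. if i = j then 1 else (0::real))"
  have ww: "w \<bullet> w = (\<Sum>k<n. w$k * w$k)" using w unfolding scalar_prod_def
    by (auto intro: sum.cong)
  have "(hh n w * hh n w) $$ (i,j) = (\<Sum>k<n. (d i k - c * w$i * w$k) * (d k j - c * w$k * w$j))"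
    using i j unfolding hh_def c_def d_def by (auto simp: scalar_prod_def intro!: sum.cong)
  also have "\<dots> = (\<Sum>k<n. d i k * d k j - c*w$i*(w$k*d k j) - c*w$j*(d i k*w$k) + c*c*w$i*w$j*(w$k*w$k))"
    by (rule sum.cong) (simp_all add: algebra_simps)
  also have "\<dots> = (\<Sum>k<n. d i k * d k j) - c * w$i * (\<Sum>k<n. w$k * d k j) - c * w$j * (\<Sum>k<n. d i k * w$k)
     + c * c * w$i * w$j * (\<Sum>k<n. w$k * w$k)"
    by (simp add: sum.distrib sum_subtractf sum_distrib_left)
  also have "\<dots> = d i j - 2 * c * w$i * w$j + c * c * w$i * w$j * (w \<bullet> w)"
    using i j unfolding d_def ww by (simp add: sum_delta_l sum_delta_r)
  also have "\<dots> = d i j"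
  proof (cases "w \<bullet> w = 0")
    case True thus ?thesis unfolding c_def by simp
  next
    case False
    hence cc: "c * c * (w \<bullet> w) = 2 * c" unfolding c_def by (simp add: field_simps)
    have "c * c * w$i * w$j * (w \<bullet> w) = w$i * w$j * (c * c * (w \<bullet> w))" by (simp only: mult_ac)
    also have "\<dots> = 2 * c * w$i * w$j" unfolding cc by (simp only: mult_ac)
    finally show ?thesis by simp
  qed
  finally show "(hh n w * hh n w) $$ (i,j) = 1\<^sub>m n $$ (i,j)" using i j unfolding d_def by simp
qed (auto simp: hh_def)

lemma hh_e0: assumes u: "u \<in> carrier_vec n" and uu: "u \<bullet> u = 1" and n: "0 < n"
  shows "hh n (u - unit_vec n 0) *\<^sub>v unit_vec n 0 = u"
proof (intro eq_vecI)
  define w where "w = u - unit_vec n 0"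
  have w: "w \<in> carrier_vec n" using u unfolding w_def by auto
  have ww: "w \<bullet> w = 2 - 2 * u$0"
  proof -
    have e: "unit_vec n 0 \<in> carrier_vec n" by simp
    have "w \<bullet> w = (u \<bullet> u - u \<bullet> unit_vec n 0) - (unit_vec n 0 \<bullet> u - unit_vec n 0 \<bullet> unit_vec n 0)"
      unfolding w_def
      apply (subst minus_scalar_prod_distrib[OF u e])
       apply (rule minus_carrier_vec[OF u e])
      apply (subst scalar_prod_minus_distrib[OF u u e])
      apply (subst scalar_prod_minus_distrib[OF e u e])
      by (rule refl)
    thus ?thesis using uu n u by simp
  qed
  have w0: "w$0 = u$0 - 1" unfolding w_def using u n by simp
  fix i assume "i < dim_vec u"
  hence i: "i < n" using u by auto
  have "(hh n w *\<^sub>v unit_vec n 0) $ i = (if i = 0 then 1 else 0) - 2 / (w \<bullet> w) * w$i * w$0"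
    using i n unfolding hh_def by simp
  also have "\<dots> = u $ i"
  proof (cases "w \<bullet> w = 0")
    case True
    hence "w = 0\<^sub>v n" using self_sprod_zero[OF w] by auto
    have "u = unit_vec n 0"
    proof (rule eq_vecI)
      fix j assume "j < dim_vec (unit_vec n 0)"
      hence j: "j < n" by simp
      have "w $ j = u $ j - unit_vec n 0 $ j" unfolding w_def using u j by simp
      thus "u $ j = unit_vec n 0 $ j" using \<open>w = 0\<^sub>v n\<close> j by simp
    qed (use u in simp)
    thus ?thesis using True i n by simp
  next
    case False
    hence "u$0 \<noteq> 1" unfolding ww by simp
    hence "2 / (w \<bullet> w) * w$0 = -1" unfolding ww w0 by (simp add: field_simps)
    hence "(if i = 0 then 1 else 0) - 2 / (w \<bullet> w) * w$i * w$0 = (if i = 0 then 1 else 0) + w $ i"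
    proof -
      have "2 / (w \<bullet> w) * w$i * w$0 = w$i * (2 / (w \<bullet> w) * w$0)" by (simp only: mult_ac)
      also have "\<dots> = - w$i" by (subst \<open>2 / (w \<bullet> w) * w$0 = -1\<close>) simp
      finally show ?thesis by simp
    qed
    moreover have "w $ i = u $ i - unit_vec n 0 $ i" unfolding w_def using u i by simp
    ultimately show ?thesis using i by simp
  qed
  finally show "(hh n (u - unit_vec n 0) *\<^sub>v unit_vec n 0) $ i = u $ i" unfolding w_def .
qed (insert u, auto simp: hh_def)


lemma spectral:
  fixes A :: "real mat"
  assumes "A \<in> carrier_mat n n" "transpose_mat A = A" "char_poly A = (\<Prod>e\<leftarrow>es. [:-e,1:])"
  shows "\<exists>P. P \<in> carrier_mat n n \<and> transpose_mat P * P = 1\<^sub>m n \<and>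
     (\<forall>i<n. \<forall>j<n. (transpose_mat P * A * P) $$ (i,j) = (if i = j then es!i else 0))"
  using assms
proof (induction es arbitrary: n A)
  case Nil
  then have "n = 0" using degree_monic_char_poly[of A n] by auto
  then show ?case by (intro exI[of _ "1\<^sub>m 0"]) auto
next
  case (Cons e es n A)
  have A: "A \<in> carrier_mat n n" and sym: "transpose_mat A = A"
    and cp: "char_poly A = [:-e,1:] * (\<Prod>e\<leftarrow>es. [:-e,1:])" using Cons.prems by auto
  have mon: "monic (\<Prod>e\<leftarrow>es. [:-e,1:])" by (rule monic_prod_list, auto)
  have deg: "degree (char_poly A) = Suc (degree (\<Prod>e\<leftarrow>es. [:-e,1:]))" unfolding cp
    by (subst degree_mult_eq, insert mon, auto)
  with degree_monic_char_poly[OF A] obtain m where nm: "n = Suc m" by (cases n) auto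
  have "eigenvalue A e" unfolding eigenvalue_root_char_poly[OF A] cp by simp
  then obtain v where ev: "eigenvector A v e" unfolding eigenvalue_def by auto
  hence v: "v \<in> carrier_vec n" and v0: "v \<noteq> 0\<^sub>v n" and Av: "A *\<^sub>v v = e \<cdot>\<^sub>v v"
    using A unfolding eigenvector_def by auto
  have vv: "v \<bullet> v > 0" using self_sprod_nonneg[of v] self_sprod_zero[OF v] v0 by force
  define c where "c = 1 / sqrt (v \<bullet> v)"
  define u where "u = c \<cdot>\<^sub>v v"
  have u: "u \<in> carrier_vec n" unfolding u_def using v by simp
  have uu: "u \<bullet> u = 1"
  proof -
    have "u \<bullet> u = c * c * (v \<bullet> v)" unfolding u_def using v by simp
    also have "\<dots> = 1" unfolding c_def using vv
      by (simp add: field_simps)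
    finally show ?thesis .
  qed
  have Au: "A *\<^sub>v u = e \<cdot>\<^sub>v u"
  proof -
    have "A *\<^sub>v u = c \<cdot>\<^sub>v (e \<cdot>\<^sub>v v)" unfolding u_def mult_mat_vec[OF A v] Av ..
    also have "\<dots> = e \<cdot>\<^sub>v u" unfolding u_def by (intro eq_vecI) auto
    finally show ?thesis .
  qed
  define H where "H = hh n (u - unit_vec n 0)"
  have H: "H \<in> carrier_mat n n" unfolding H_def by (rule hh_carrier)
  have HT: "transpose_mat H = H" unfolding H_def by (rule hh_sym)
  have HH: "H * H = 1\<^sub>m n" unfolding H_def by (rule hh_sq, insert u, simp)
  have He: "H *\<^sub>v unit_vec n 0 = u" unfolding H_def by (rule hh_e0[OF u uu], simp add: nm)
  define A' where "A' = H * A * H"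
  have A': "A' \<in> carrier_mat n n" unfolding A'_def using H A by simp
  have symA': "transpose_mat A' = A'"
  proof -
    have "transpose_mat A' = transpose_mat H * transpose_mat (H * A)"
      unfolding A'_def by (rule transpose_mult[of "H * A" n n H n], insert H A, auto)
    also have "\<dots> = H * (transpose_mat A * transpose_mat H)"
      by (subst transpose_mult[OF H A], simp add: HT)
    also have "\<dots> = A'" unfolding A'_def sym HT using H A by simp
    finally show ?thesis .
  qed
  have col0: "A' *\<^sub>v unit_vec n 0 = e \<cdot>\<^sub>v unit_vec n 0"
  proof -
    have e0: "unit_vec n 0 \<in> carrier_vec n" by simp
    have "A' *\<^sub>v unit_vec n 0 = H *\<^sub>v (A *\<^sub>v (H *\<^sub>v unit_vec n 0))"
      unfolding A'_def
      by (subst assoc_mult_mat_vec[of "H*A" n n H n], insert H A, auto)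
    also have "\<dots> = H *\<^sub>v (e \<cdot>\<^sub>v u)" unfolding He Au ..
    also have "\<dots> = e \<cdot>\<^sub>v (H *\<^sub>v u)" by (rule mult_mat_vec[OF H u])
    also have "H *\<^sub>v u = unit_vec n 0" unfolding He[symmetric]
      using H HH by (simp add: assoc_mult_mat_vec[symmetric, OF H H e0])
    finally show ?thesis .
  qed
  have A'i0: "A' $$ (i,0) = (if i = 0 then e else 0)" if i: "i < n" for i
  proof -
    have "(A' *\<^sub>v unit_vec n 0) $ i = A' $$ (i,0)" using A' i nm by simp
    thus ?thesis unfolding col0 using i nm by (cases "i = 0") auto
  qed
  have A'0j: "A' $$ (0,j) = (if j = 0 then e else 0)" if j: "j < n" for j
  proof -
    have "A' $$ (0,j) = transpose_mat A' $$ (j,0)" using A' j nm by simp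
    thus ?thesis unfolding symA' using A'i0[OF j] by simp
  qed
  define A3 where "A3 = mat m m (\<lambda>(i,j). A' $$ (Suc i, Suc j))"
  define A1 where "A1 = mat 1 1 (\<lambda>_. e)"
  have A1: "A1 \<in> carrier_mat 1 1" unfolding A1_def by simp
  have A3: "A3 \<in> carrier_mat m m" unfolding A3_def by simp
  have Z1: "0\<^sub>m 1 m \<in> carrier_mat 1 m" by simp
  have blk: "A' = four_block_mat A1 (0\<^sub>m 1 m) (0\<^sub>m m 1) A3"
  proof (rule eq_matI)
    fix i j assume "i < dim_row (four_block_mat A1 (0\<^sub>m 1 m) (0\<^sub>m m 1) A3)"
      "j < dim_col (four_block_mat A1 (0\<^sub>m 1 m) (0\<^sub>m m 1) A3)"
    hence i: "i < Suc m" and j: "j < Suc m" unfolding A1_def A3_def by auto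
    show "A' $$ (i,j) = four_block_mat A1 (0\<^sub>m 1 m) (0\<^sub>m m 1) A3 $$ (i,j)"
    proof (cases "i = 0 \<or> j = 0")
      case True
      thus ?thesis using i j A'i0 A'0j nm unfolding A1_def A3_def by auto
    next
      case False
      then obtain i' j' where ij: "i = Suc i'" "j = Suc j'" by (cases i; cases j) auto
      thus ?thesis using i j unfolding A1_def A3_def by auto
    qed
  qed (insert A' nm, auto simp: A1_def A3_def)
  have symA3: "transpose_mat A3 = A3"
  proof (rule eq_matI)
    fix i j assume "i < dim_row A3" "j < dim_col A3"
    hence i: "i < m" and j: "j < m" unfolding A3_def by auto
    have "A' $$ (Suc j, Suc i) = transpose_mat A' $$ (Suc i, Suc j)" using A' i j nm by simp
    thus "transpose_mat A3 $$ (i,j) = A3 $$ (i,j)" unfolding symA' using i j unfolding A3_def by simp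
  qed (auto simp: A3_def)
  have "similar_mat A' A" unfolding similar_mat_def
    by (rule exI[of _ H], rule exI[of _ H], unfold similar_mat_wit_def Let_def,
        insert A' A H HH, auto simp: A'_def)
  from char_poly_similar[OF this] cp
  have "char_poly A' = [:-e,1:] * (\<Prod>e\<leftarrow>es. [:-e,1:])" by simp
  also have "char_poly A' = char_poly A1 * char_poly A3"
    unfolding blk by (rule char_poly_four_block_zeros_col[OF A1 Z1 A3])
  also have "char_poly A1 = [:-e,1:]"
    by (simp add: A1_def char_poly_defs det_def sign_def)
  finally have cpA3: "char_poly A3 = (\<Prod>e\<leftarrow>es. [:-e,1:])"
    by (metis mult_cancel_left pCons_eq_0_iff zero_neq_one)
  from Cons.IH[OF A3 symA3 cpA3] obtain P3 where P3: "P3 \<in> carrier_mat m m"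
    and P3P3: "transpose_mat P3 * P3 = 1\<^sub>m m"
    and P3A3: "\<forall>i<m. \<forall>j<m. (transpose_mat P3 * A3 * P3) $$ (i,j) = (if i = j then es!i else 0)"
    by blast
  define F where "F = four_block_mat (1\<^sub>m 1) (0\<^sub>m 1 m) (0\<^sub>m m 1) P3"
  have F: "F \<in> carrier_mat n n" unfolding F_def nm using four_block_carrier_mat[OF _ P3, of "1\<^sub>m 1" 1 1] by simp
  have FT: "transpose_mat F = four_block_mat (1\<^sub>m 1) (0\<^sub>m 1 m) (0\<^sub>m m 1) (transpose_mat P3)"
    unfolding F_def by (subst transpose_four_block_mat, insert P3, auto)
  have FTF: "transpose_mat F * F = 1\<^sub>m n"
    unfolding FT unfolding F_def nm
    by (subst mult_four_block_mat, insert P3, auto simp: P3P3)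
  define P where "P = H * F"
  have P: "P \<in> carrier_mat n n" unfolding P_def using H F by simp
  have PT: "transpose_mat P = transpose_mat F * H" unfolding P_def
    by (subst transpose_mult[OF H F], simp add: HT)
  have FT': "transpose_mat F \<in> carrier_mat n n" using F by simp
  have "transpose_mat P * P = (transpose_mat F * H) * (H * F)"
    unfolding PT by (simp add: P_def)
  also have "\<dots> = transpose_mat F * (H * H) * F"
    using H F FT' by (simp add: assoc_mult_mat[of _ n n _ n _ n])
  also have "\<dots> = 1\<^sub>m n" unfolding HH using F FT' FTF by simp
  finally have PP: "transpose_mat P * P = 1\<^sub>m n" .
  have "transpose_mat P * A * P = (transpose_mat F * H) * A * (H * F)"
    unfolding PT by (simp add: P_def)
  also have "\<dots> = transpose_mat F * A' * F"
    unfolding A'_def using H F FT' A by (simp add: assoc_mult_mat[of _ n n _ n _ n])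
  also have "\<dots> = four_block_mat A1 (0\<^sub>m 1 m) (0\<^sub>m m 1) (transpose_mat P3 * A3 * P3)"
    unfolding FT unfolding blk F_def
  proof -
    have one1: "1\<^sub>m 1 \<in> carrier_mat 1 1" by simp
    have Z2: "0\<^sub>m m 1 \<in> carrier_mat m 1" by simp
    have P3T: "transpose_mat P3 \<in> carrier_mat m m" using P3 by simp
    have "four_block_mat (1\<^sub>m 1) (0\<^sub>m 1 m) (0\<^sub>m m 1) (transpose_mat P3) * four_block_mat A1 (0\<^sub>m 1 m) (0\<^sub>m m 1) A3
      = four_block_mat A1 (0\<^sub>m 1 m) (0\<^sub>m m 1) (transpose_mat P3 * A3)"
      by (subst mult_four_block_mat[OF one1 Z1 Z2 P3T A1 Z1 Z2 A3], insert A1 A3 P3, simp)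
    moreover have "four_block_mat A1 (0\<^sub>m 1 m) (0\<^sub>m m 1) (transpose_mat P3 * A3) * four_block_mat (1\<^sub>m 1) (0\<^sub>m 1 m) (0\<^sub>m m 1) P3
      = four_block_mat A1 (0\<^sub>m 1 m) (0\<^sub>m m 1) (transpose_mat P3 * A3 * P3)"
      by (subst mult_four_block_mat[OF A1 Z1 Z2 _ one1 Z1 Z2 P3], insert A1 A3 P3, simp_all)
    ultimately show "four_block_mat (1\<^sub>m 1) (0\<^sub>m 1 m) (0\<^sub>m m 1) (transpose_mat P3) * four_block_mat A1 (0\<^sub>m 1 m) (0\<^sub>m m 1) A3 *
      four_block_mat (1\<^sub>m 1) (0\<^sub>m 1 m) (0\<^sub>m m 1) P3 = four_block_mat A1 (0\<^sub>m 1 m) (0\<^sub>m m 1) (transpose_mat P3 * A3 * P3)"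
      by simp
  qed
  finally have PAP: "transpose_mat P * A * P = four_block_mat A1 (0\<^sub>m 1 m) (0\<^sub>m m 1) (transpose_mat P3 * A3 * P3)" .
  show ?case
  proof (intro exI[of _ P] conjI allI impI)
    fix i j assume i: "i < n" and j: "j < n"
    show "(transpose_mat P * A * P) $$ (i,j) = (if i = j then (e # es) ! i else 0)"
    proof (cases "i = 0 \<or> j = 0")
      case True
      thus ?thesis unfolding PAP using i j nm P3 A3 unfolding A1_def by auto
    next
      case False
      then obtain i' j' where ij: "i = Suc i'" "j = Suc j'" by (cases i; cases j) auto
      thus ?thesis unfolding PAP using i j nm P3 A3 P3A3 unfolding A1_def by auto
    qed
  qed (insert P PP, auto)
qed


lemma key_ineq:
  fixes lp mq s X Y Z K :: real
  assumes "s \<ge> 0" "K \<ge> 0" "K = lp * s * X - lp * mq * s * s - Z + mq * s * Y"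
    "s = 0 \<Longrightarrow> X = 0 \<and> Y = 0 \<and> Z = 0"
  shows "lp * mq + Z / s \<le> (1 - s) * lp * mq + lp * X + mq * Y"
proof (cases "s = 0")
  case True thus ?thesis using assms by simp
next
  case False
  hence s: "s > 0" using assms by simp
  have "s * (lp * mq + Z / s) = s * lp * mq + Z" using s by (simp add: field_simps)
  also have "\<dots> \<le> s * ((1 - s) * lp * mq + lp * X + mq * Y)" using assms(2,3)
    by (simp add: algebra_simps)
  finally show ?thesis using s by simp
qed

lemma assign_lb:
  fixes W :: "nat \<Rightarrow> nat \<Rightarrow> real" and lam mu :: "nat \<Rightarrow> real"
  assumes "finite I" "finite J" "card I = card J"
    "\<forall>i\<in>I. \<forall>j\<in>J. W i j \<ge> 0" "\<forall>i\<in>I. (\<Sum>j\<in>J. W i j) = 1" "\<forall>j\<in>J. (\<Sum>i\<in>I. W i j) = 1"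
  shows "\<exists>\<sigma>. bij_betw \<sigma> I J \<and> (\<Sum>i\<in>I. lam i * mu (\<sigma> i)) \<le> (\<Sum>i\<in>I. \<Sum>j\<in>J. W i j * lam i * mu j)"
  using assms
proof (induction "card I" arbitrary: I J W)
  case 0
  then have "I = {}" "J = {}" by auto
  thus ?case by (intro exI[of _ id]) (auto simp: bij_betw_def)
next
  case (Suc m I J W)
  have fI: "finite I" and fJ: "finite J" and cI: "card I = Suc m" and cJ: "card J = Suc m"
    and W0: "\<And>i j. i \<in> I \<Longrightarrow> j \<in> J \<Longrightarrow> W i j \<ge> 0"
    and Wr: "\<And>i. i \<in> I \<Longrightarrow> (\<Sum>j\<in>J. W i j) = 1"
    and Wc: "\<And>j. j \<in> J \<Longrightarrow> (\<Sum>i\<in>I. W i j) = 1" using Suc by auto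
  have "I \<noteq> {}" "J \<noteq> {}" using cI cJ by auto
  obtain p where p: "p \<in> I" and pmax: "\<And>i. i \<in> I \<Longrightarrow> lam i \<le> lam p"
  proof -
    have "Max (lam ` I) \<in> lam ` I" using fI \<open>I \<noteq> {}\<close> by simp
    then obtain p where "p \<in> I" "lam p = Max (lam ` I)" by auto
    thus ?thesis using that fI by auto
  qed
  obtain q where q: "q \<in> J" and qmin: "\<And>j. j \<in> J \<Longrightarrow> mu q \<le> mu j"
  proof -
    have "Min (mu ` J) \<in> mu ` J" using fJ \<open>J \<noteq> {}\<close> by simp
    then obtain q where "q \<in> J" "mu q = Min (mu ` J)" by auto
    thus ?thesis using that fJ by auto
  qed
  define I' where "I' = I - {p}"
  define J' where "J' = J - {q}"
  have fI': "finite I'" and fJ': "finite J'" using fI fJ unfolding I'_def J'_def by auto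
  have cI': "card I' = m" and cJ': "card J' = m" using cI cJ p q unfolding I'_def J'_def by auto
  define s where "s = 1 - W p q"
  have rowp: "W p q + (\<Sum>j\<in>J'. W p j) = 1" using Wr[OF p] sum.remove[OF fJ q, of "W p"]
    unfolding J'_def by simp
  have colq: "W p q + (\<Sum>l\<in>I'. W l q) = 1" using Wc[OF q] sum.remove[OF fI p, of "\<lambda>l. W l q"]
    unfolding I'_def by simp
  have sa: "(\<Sum>j\<in>J'. W p j) = s" using rowp unfolding s_def by simp
  have sb: "(\<Sum>l\<in>I'. W l q) = s" using colq unfolding s_def by simp
  have Wa0: "\<And>j. j \<in> J' \<Longrightarrow> W p j \<ge> 0" using W0 p unfolding J'_def by auto
  have Wb0: "\<And>l. l \<in> I' \<Longrightarrow> W l q \<ge> 0" using W0 q unfolding I'_def by auto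
  have s0: "s \<ge> 0" unfolding sa[symmetric] by (rule sum_nonneg, rule Wa0)
  have sz: "s = 0 \<Longrightarrow> (\<forall>j\<in>J'. W p j = 0) \<and> (\<forall>l\<in>I'. W l q = 0)"
  proof -
    assume "s = 0"
    hence "(\<Sum>j\<in>J'. W p j) = 0" "(\<Sum>l\<in>I'. W l q) = 0" using sa sb by auto
    thus ?thesis using sum_nonneg_eq_0_iff[OF fJ', of "W p"] sum_nonneg_eq_0_iff[OF fI', of "\<lambda>l. W l q"]
      Wa0 Wb0 by auto
  qed
  define W' where "W' = (\<lambda>l j. W l j + W p j * W l q / s)"
  have W'0: "\<forall>i\<in>I'. \<forall>j\<in>J'. W' i j \<ge> 0"
    unfolding W'_def using W0 Wa0 Wb0 s0 unfolding I'_def J'_def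
    by (auto intro!: add_nonneg_nonneg divide_nonneg_nonneg mult_nonneg_nonneg)
  have W'r: "\<forall>l\<in>I'. (\<Sum>j\<in>J'. W' l j) = 1"
  proof
    fix l assume l: "l \<in> I'"
    have "(\<Sum>j\<in>J. W l j) = W l q + (\<Sum>j\<in>J'. W l j)" using sum.remove[OF fJ q, of "W l"]
      unfolding J'_def by simp
    hence r: "(\<Sum>j\<in>J'. W l j) = 1 - W l q" using Wr l unfolding I'_def by auto
    have "(\<Sum>j\<in>J'. W' l j) = (\<Sum>j\<in>J'. W l j) + W l q * (\<Sum>j\<in>J'. W p j) / s"
      unfolding W'_def sum.distrib by (simp add: sum_divide_distrib[symmetric] sum_distrib_left mult.commute)
    also have "\<dots> = 1" unfolding r sa using sz l by (cases "s = 0") auto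
    finally show "(\<Sum>j\<in>J'. W' l j) = 1" .
  qed
  have W'c: "\<forall>j\<in>J'. (\<Sum>l\<in>I'. W' l j) = 1"
  proof
    fix j assume j: "j \<in> J'"
    have "(\<Sum>l\<in>I. W l j) = W p j + (\<Sum>l\<in>I'. W l j)" using sum.remove[OF fI p, of "\<lambda>l. W l j"]
      unfolding I'_def by simp
    hence r: "(\<Sum>l\<in>I'. W l j) = 1 - W p j" using Wc j unfolding J'_def by auto
    have "(\<Sum>l\<in>I'. W' l j) = (\<Sum>l\<in>I'. W l j) + W p j * (\<Sum>l\<in>I'. W l q) / s"
      unfolding W'_def sum.distrib by (simp add: sum_divide_distrib[symmetric] sum_distrib_left)
    also have "\<dots> = 1" unfolding r sb using sz j by (cases "s = 0") auto
    finally show "(\<Sum>l\<in>I'. W' l j) = 1" .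
  qed
  from Suc.hyps(1)[of I' J' W'] cI' cJ' fI' fJ' W'0 W'r W'c
  obtain \<sigma>' where bij': "bij_betw \<sigma>' I' J'"
    and ih: "(\<Sum>i\<in>I'. lam i * mu (\<sigma>' i)) \<le> (\<Sum>i\<in>I'. \<Sum>j\<in>J'. W' i j * lam i * mu j)" by auto
  define \<sigma> where "\<sigma> = \<sigma>'(p := q)"
  have "bij_betw \<sigma> I' J'" unfolding \<sigma>_def using bij' by (rule bij_betw_cong[THEN iffD1, rotated]) (auto simp: I'_def)
  from notIn_Un_bij_betw[OF _ _ this, of p]
  have bij: "bij_betw \<sigma> I J" unfolding \<sigma>_def using p q unfolding I'_def J'_def
    by (simp add: insert_absorb)
  have sumsig: "(\<Sum>i\<in>I. lam i * mu (\<sigma> i)) = lam p * mu q + (\<Sum>i\<in>I'. lam i * mu (\<sigma>' i))"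
  proof -
    have "(\<Sum>i\<in>I'. lam i * mu (\<sigma> i)) = (\<Sum>i\<in>I'. lam i * mu (\<sigma>' i))"
      by (rule sum.cong) (auto simp: \<sigma>_def I'_def)
    thus ?thesis using sum.remove[OF fI p, of "\<lambda>i. lam i * mu (\<sigma> i)"] unfolding I'_def
      by (simp add: \<sigma>_def)
  qed
  define X where "X = (\<Sum>j\<in>J'. W p j * mu j)"
  define Y where "Y = (\<Sum>l\<in>I'. W l q * lam l)"
  define Z where "Z = (\<Sum>l\<in>I'. \<Sum>j\<in>J'. W p j * W l q * lam l * mu j)"
  define K where "K = (\<Sum>l\<in>I'. \<Sum>j\<in>J'. W p j * W l q * ((lam p - lam l) * (mu j - mu q)))"
  have K0: "K \<ge> 0" unfolding K_def
  proof (intro sum_nonneg)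
    fix l j assume l: "l \<in> I'" and j: "j \<in> J'"
    have "lam p - lam l \<ge> 0" "mu j - mu q \<ge> 0" using pmax qmin l j unfolding I'_def J'_def by auto
    thus "W p j * W l q * ((lam p - lam l) * (mu j - mu q)) \<ge> 0" using Wa0[OF j] Wb0[OF l] by simp
  qed
  have aux: "(\<Sum>l\<in>I'. lam l * (mu q * W l q)) = mu q * (\<Sum>l\<in>I'. lam l * W l q)"
    by (simp add: sum_distrib_left mult_ac)
  have KE: "K = lam p * s * X - lam p * mu q * s * s - Z + mu q * s * Y"
  proof -
    have "K = (\<Sum>l\<in>I'. \<Sum>j\<in>J'. lam p * W l q * (W p j * mu j) - lam p * mu q * W l q * W p j
        - W p j * W l q * lam l * mu j + mu q * (W l q * lam l) * W p j)"
      unfolding K_def by (intro sum.cong refl) (simp add: algebra_simps)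
    also have "\<dots> = (\<Sum>l\<in>I'. lam p * W l q * X - lam p * mu q * W l q * s
        - (\<Sum>j\<in>J'. W p j * W l q * lam l * mu j) + mu q * (W l q * lam l) * s)"
      unfolding X_def sa[symmetric]
      by (simp add: sum_subtractf sum.distrib sum_distrib_left)
    also have "\<dots> = lam p * s * X - lam p * mu q * s * s - Z + mu q * s * Y"
      unfolding Z_def Y_def using aux
      by (simp add: sum_subtractf sum.distrib sum_distrib_left[symmetric] sum_distrib_right[symmetric] sb
          mult.commute mult.left_commute)
    finally show ?thesis .
  qed
  have sz': "s = 0 \<Longrightarrow> X = 0 \<and> Y = 0 \<and> Z = 0" using sz unfolding X_def Y_def Z_def by simp
  have main: "lam p * mu q + Z / s \<le> (1 - s) * lam p * mu q + lam p * X + mu q * Y"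
    by (rule key_ineq[OF s0 K0 KE sz'])
  have LHS: "(\<Sum>i\<in>I. \<Sum>j\<in>J. W i j * lam i * mu j)
     = (1 - s) * lam p * mu q + lam p * X + mu q * Y + (\<Sum>l\<in>I'. \<Sum>j\<in>J'. W l j * lam l * mu j)"
  proof -
    have e1: "\<And>l. (\<Sum>j\<in>J. W l j * lam l * mu j) = W l q * lam l * mu q + (\<Sum>j\<in>J'. W l j * lam l * mu j)"
      using sum.remove[OF fJ q] unfolding J'_def by simp
    have "(\<Sum>i\<in>I. \<Sum>j\<in>J. W i j * lam i * mu j) = (\<Sum>j\<in>J. W p j * lam p * mu j) + (\<Sum>l\<in>I'. \<Sum>j\<in>J. W l j * lam l * mu j)"
      using sum.remove[OF fI p] unfolding I'_def by simp
    also have "\<dots> = W p q * lam p * mu q + lam p * X + ((\<Sum>l\<in>I'. W l q * lam l) * mu q + (\<Sum>l\<in>I'. \<Sum>j\<in>J'. W l j * lam l * mu j))"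
      unfolding e1 X_def sum.distrib by (simp add: sum_distrib_left sum_distrib_right mult.commute mult.left_commute)
    also have "\<dots> = (1 - s) * lam p * mu q + lam p * X + mu q * Y + (\<Sum>l\<in>I'. \<Sum>j\<in>J'. W l j * lam l * mu j)"
      unfolding Y_def s_def by (simp add: algebra_simps)
    finally show ?thesis .
  qed
  have RHS: "(\<Sum>i\<in>I'. \<Sum>j\<in>J'. W' i j * lam i * mu j) = (\<Sum>l\<in>I'. \<Sum>j\<in>J'. W l j * lam l * mu j) + Z / s"
    unfolding W'_def Z_def
    by (simp add: sum.distrib sum_divide_distrib[symmetric] algebra_simps)
  show ?case
  proof (intro exI[of _ \<sigma>] conjI bij)
    show "(\<Sum>i\<in>I. lam i * mu (\<sigma> i)) \<le> (\<Sum>i\<in>I. \<Sum>j\<in>J. W i j * lam i * mu j)"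
      unfolding sumsig LHS using ih RHS main by linarith
  qed
qed


lemma elem_sym_perm:
  assumes bij: "bij_betw \<tau> {0..<n} {0..<n}" and d: "dim_vec nu = n" "dim_vec lam = n"
    and e: "\<forall>i<n. nu $ i = lam $ (\<tau> i)"
  shows "elem_sym j nu = elem_sym j lam"
proof -
  define S where "S = {0..<n}"
  define F where "F = {I. I \<subseteq> S \<and> card I = j}"
  define \<tau>' where "\<tau>' = inv_into S \<tau>"
  have bij': "bij_betw \<tau>' S S" unfolding \<tau>'_def S_def by (rule bij_betw_inv_into[OF bij])
  have inj: "inj_on \<tau> S" and im: "\<tau> ` S = S" using bij unfolding S_def bij_betw_def by auto
  have inj': "inj_on \<tau>' S" and im': "\<tau>' ` S = S" using bij' unfolding bij_betw_def by auto
  have "elem_sym j nu = (\<Sum>I\<in>F. \<Prod>i\<in>I. lam $ (\<tau> i))"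
    unfolding elem_sym_def F_def S_def d
    by (intro sum.cong refl prod.cong) (use e in auto)
  also have "\<dots> = (\<Sum>I\<in>F. \<Prod>x\<in>\<tau> ` I. lam $ x)"
  proof (intro sum.cong refl)
    fix I assume "I \<in> F"
    hence "inj_on \<tau> I" using inj unfolding F_def by (auto intro: inj_on_subset)
    thus "(\<Prod>i\<in>I. lam $ (\<tau> i)) = (\<Prod>x\<in>\<tau> ` I. lam $ x)" by (simp add: prod.reindex)
  qed
  also have "\<dots> = (\<Sum>K\<in>F. \<Prod>x\<in>K. lam $ x)"
  proof (rule sum.reindex_bij_witness[of _ "\<lambda>K. \<tau>' ` K" "\<lambda>I. \<tau> ` I"])
    fix K assume K: "K \<in> F"
    hence KS: "K \<subseteq> S" unfolding F_def by auto
    show "\<tau> ` (\<tau>' ` K) = K" unfolding \<tau>'_def by (rule image_inv_into_cancel[OF im KS])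
    have "card (\<tau>' ` K) = card K" using inj' KS by (auto intro: card_image inj_on_subset)
    thus "\<tau>' ` K \<in> F" using K im' KS unfolding F_def by auto
  next
    fix I assume I: "I \<in> F"
    hence IS: "I \<subseteq> S" unfolding F_def by auto
    show "\<tau>' ` (\<tau> ` I) = I" unfolding \<tau>'_def by (rule inv_into_image_cancel[OF inj IS])
    have "card (\<tau> ` I) = card I" using inj IS by (auto intro: card_image inj_on_subset)
    thus "\<tau> ` I \<in> F" using I im IS unfolding F_def by auto
  next
    fix I assume "I \<in> F" show "(\<Prod>x\<in>\<tau> ` I. lam $ x) = (\<Prod>x\<in>\<tau> ` I. lam $ x)" by simp
  qed
  also have "\<dots> = elem_sym j lam" unfolding elem_sym_def F_def S_def d ..
  finally show ?thesis .
qed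

lemma elem_sym_smult: "elem_sym j (c \<cdot>\<^sub>v v) = c ^ j * elem_sym j v"
  unfolding elem_sym_def
proof (simp add: sum_distrib_left, intro sum.cong refl)
  fix I assume "I \<in> {I. I \<subseteq> {0..<dim_vec v} \<and> card I = j}"
  hence I: "I \<subseteq> {0..<dim_vec v}" "card I = j" by auto
  have "(\<Prod>i\<in>I. (c \<cdot>\<^sub>v v) $ i) = (\<Prod>i\<in>I. c * v $ i)" using I by (intro prod.cong) auto
  also have "\<dots> = c ^ j * (\<Prod>i\<in>I. v $ i)" using I by (simp add: prod.distrib)
  finally show "(\<Prod>i\<in>I. (c \<cdot>\<^sub>v v) $ i) = c ^ j * (\<Prod>i\<in>I. v $ i)" .
qed

lemma perm_bound:
  assumes k: "1 \<le> k" "k \<le> n" and lam: "lam \<in> Gamma n k" and mu: "mu \<in> Gamma_dual n k"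
    and sig: "bij_betw \<sigma> {0..<n} {0..<n}"
  shows "real n * rho_dual k mu * rho k lam \<le> (\<Sum>i<n. lam $ i * mu $ (\<sigma> i))"
proof -
  define \<tau> where "\<tau> = inv_into {0..<n} \<sigma>"
  have tau: "bij_betw \<tau> {0..<n} {0..<n}" unfolding \<tau>_def by (rule bij_betw_inv_into[OF sig])
  have lamc: "lam \<in> carrier_vec n" and lpos: "\<And>j. j \<in> {1..k} \<Longrightarrow> elem_sym j lam > 0"
    using lam unfolding Gamma_def by auto
  have muc: "mu \<in> carrier_vec n" and mupos: "\<And>x. x \<in> Gamma n k \<Longrightarrow> mu \<bullet> x \<ge> 0"
    using mu unfolding Gamma_dual_def by auto
  define nu where "nu = vec n (\<lambda>j. lam $ \<tau> j)"
  have nuc: "nu \<in> carrier_vec n" unfolding nu_def by simp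
  have esym: "elem_sym j nu = elem_sym j lam" for j
    by (rule elem_sym_perm[OF tau]) (use lamc in \<open>auto simp: nu_def\<close>)
  define C where "C = real (n choose k)"
  have C: "C > 0" unfolding C_def using k by simp
  define r where "r = rho k lam"
  have r: "r > 0" unfolding r_def rho_def using lpos[of k] k C lamc unfolding C_def by simp
  have rnu: "rho k nu = r" unfolding r_def rho_def esym using nuc lamc by simp
  define nu' where "nu' = (1 / r) \<cdot>\<^sub>v nu"
  have nu'c: "nu' \<in> carrier_vec n" unfolding nu'_def using nuc by simp
  have nu'G: "nu' \<in> Gamma n k" unfolding Gamma_def
    using nu'c lpos r by (auto simp: nu'_def elem_sym_smult esym)
  have rnu': "rho k nu' = 1"
  proof -
    have "rho k nu' = root k ((1 / r) ^ k * (elem_sym k lam / C))"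
      unfolding rho_def nu'_def elem_sym_smult esym C_def using nuc by simp
    also have "\<dots> = root k ((1 / r) ^ k) * root k (elem_sym k lam / C)"
      by (rule real_root_mult)
    also have "root k ((1 / r) ^ k) = 1 / r" using k r by (intro real_root_pos2) auto
    also have "root k (elem_sym k lam / C) = r" unfolding r_def rho_def C_def using lamc by simp
    finally show ?thesis using r by simp
  qed
  have "rho_dual k mu \<le> (mu \<bullet> nu') / real n"
    unfolding rho_dual_def
  proof (rule cInf_lower)
    show "mu \<bullet> nu' / real n \<in> {mu \<bullet> x / real (dim_vec mu) |x. x \<in> Gamma (dim_vec mu) k \<and> 1 \<le> rho k x}"
      using muc nu'G rnu' by auto
    show "bdd_below {mu \<bullet> x / real (dim_vec mu) |x. x \<in> Gamma (dim_vec mu) k \<and> 1 \<le> rho k x}"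
      by (rule bdd_belowI[of _ 0]) (use muc mupos in auto)
  qed
  also have "mu \<bullet> nu' = (1 / r) * (mu \<bullet> nu)" unfolding nu'_def using muc nuc by simp
  also have "mu \<bullet> nu = (\<Sum>i<n. lam $ i * mu $ (\<sigma> i))"
  proof -
    have "mu \<bullet> nu = (\<Sum>j\<in>{0..<n}. mu $ j * lam $ \<tau> j)" unfolding scalar_prod_def nu_def by simp
    also have "\<dots> = (\<Sum>i\<in>{0..<n}. mu $ \<sigma> i * lam $ \<tau> (\<sigma> i))"
      by (rule sum.reindex_bij_betw[OF sig, symmetric])
    also have "\<dots> = (\<Sum>i\<in>{0..<n}. lam $ i * mu $ (\<sigma> i))"
      by (intro sum.cong refl) (use sig in \<open>auto simp: \<tau>_def bij_betw_def\<close>)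
    finally show ?thesis by (simp add: atLeast0LessThan)
  qed
  finally have "rho_dual k mu \<le> 1 / r * (\<Sum>i<n. lam $ i * mu $ \<sigma> i) / real n" .
  hence h: "rho_dual k mu \<le> (\<Sum>i<n. lam $ i * mu $ \<sigma> i) / (r * real n)" by simp
  have rn: "r * real n > 0" using r k by simp
  have "rho_dual k mu * (r * real n) \<le> (\<Sum>i<n. lam $ i * mu $ \<sigma> i)"
    using h rn by (simp add: pos_le_divide_eq)
  hence "real n * rho_dual k mu * r \<le> (\<Sum>i<n. lam $ i * mu $ \<sigma> i)" by (simp add: mult_ac)
  thus ?thesis unfolding r_def .
qed

lemma sum4_swap:
  "(\<Sum>a\<in>A. \<Sum>b\<in>B. \<Sum>i\<in>C. \<Sum>j\<in>D. f a b i j) = (\<Sum>i\<in>C. \<Sum>j\<in>D. \<Sum>a\<in>A. \<Sum>b\<in>B. (f a b i j :: real))"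
proof -
  have "(\<Sum>a\<in>A. \<Sum>b\<in>B. \<Sum>i\<in>C. \<Sum>j\<in>D. f a b i j) = (\<Sum>a\<in>A. \<Sum>i\<in>C. \<Sum>b\<in>B. \<Sum>j\<in>D. f a b i j)"
    by (rule sum.cong[OF refl], rule sum.swap)
  also have "\<dots> = (\<Sum>i\<in>C. \<Sum>a\<in>A. \<Sum>b\<in>B. \<Sum>j\<in>D. f a b i j)" by (rule sum.swap)
  also have "\<dots> = (\<Sum>i\<in>C. \<Sum>a\<in>A. \<Sum>j\<in>D. \<Sum>b\<in>B. f a b i j)"
    by (rule sum.cong[OF refl], rule sum.cong[OF refl], rule sum.swap)
  also have "\<dots> = (\<Sum>i\<in>C. \<Sum>j\<in>D. \<Sum>a\<in>A. \<Sum>b\<in>B. f a b i j)"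
    by (rule sum.cong[OF refl], rule sum.swap)
  finally show ?thesis .
qed

lemma decomp_entry:
  fixes A P :: "real mat"
  assumes A: "A \<in> carrier_mat n n" and P: "P \<in> carrier_mat n n" and PP: "transpose_mat P * P = 1\<^sub>m n"
    and D: "\<forall>i<n. \<forall>j<n. (transpose_mat P * A * P) $$ (i,j) = (if i = j then d i else 0)"
  shows "\<forall>a<n. \<forall>b<n. A $$ (a,b) = (\<Sum>i<n. P $$ (a,i) * d i * P $$ (b,i))"
proof (intro allI impI)
  fix a b assume a: "a < n" and b: "b < n"
  have PT: "transpose_mat P \<in> carrier_mat n n" using P by simp
  have PPT: "P * transpose_mat P = 1\<^sub>m n" by (rule mat_mult_left_right_inverse[OF PT P PP])
  define Dm where "Dm = transpose_mat P * A * P"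
  have Dm: "Dm \<in> carrier_mat n n" unfolding Dm_def using P A by simp
  have "P * Dm * transpose_mat P = (P * transpose_mat P) * A * (P * transpose_mat P)"
    unfolding Dm_def using P PT A by (simp add: assoc_mult_mat[of _ n n _ n _ n])
  also have "\<dots> = A" unfolding PPT using A by simp
  finally have AD: "A = P * Dm * transpose_mat P" by simp
  have PD: "(P * Dm) $$ (a,l) = P $$ (a,l) * d l" if l: "l < n" for l
  proof -
    have "(P * Dm) $$ (a,l) = (\<Sum>i<n. P $$ (a,i) * (if i = l then d i else 0))"
      using a l P Dm D unfolding Dm_def[symmetric]
      by (auto simp: scalar_prod_def atLeast0LessThan intro!: sum.cong)
    also have "\<dots> = P $$ (a,l) * d l" using l by (simp add: if_distrib cong: if_cong)
    finally show ?thesis .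
  qed
  have PD2: "row P a \<bullet> col Dm l = P $$ (a,l) * d l" if l: "l < n" for l
    using PD[OF l] a l P Dm by simp
  have "A $$ (a,b) = row (P * Dm) a \<bullet> col (transpose_mat P) b"
    unfolding AD using a b P Dm by (subst index_mult_mat(1)) auto
  also have "\<dots> = (\<Sum>i<n. P $$ (a,i) * d i * P $$ (b,i))"
    unfolding scalar_prod_def using a b P Dm PD PD2
    by (auto simp: atLeast0LessThan intro!: sum.cong simp del: index_mult_mat(1))
  finally show "A $$ (a,b) = (\<Sum>i<n. P $$ (a,i) * d i * P $$ (b,i))" .
qed

lemma orth_rows:
  fixes P Q :: "real mat"
  assumes P: "P \<in> carrier_mat n n" and PP: "transpose_mat P * P = 1\<^sub>m n"
    and Q: "Q \<in> carrier_mat n n" and QQ: "transpose_mat Q * Q = 1\<^sub>m n"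
  defines "G \<equiv> \<lambda>i j. (\<Sum>k<n. P $$ (k,i) * Q $$ (k,j))"
  shows "\<forall>i<n. (\<Sum>j<n. (G i j)^2) = 1" "\<forall>j<n. (\<Sum>i<n. (G i j)^2) = 1"
proof -
  have PT: "transpose_mat P \<in> carrier_mat n n" using P by simp
  have QT: "transpose_mat Q \<in> carrier_mat n n" using Q by simp
  have PPT: "P * transpose_mat P = 1\<^sub>m n" by (rule mat_mult_left_right_inverse[OF PT P PP])
  have QQT: "Q * transpose_mat Q = 1\<^sub>m n" by (rule mat_mult_left_right_inverse[OF QT Q QQ])
  define M where "M = transpose_mat P * Q"
  have M: "M \<in> carrier_mat n n" unfolding M_def using P Q by simp
  have MT: "transpose_mat M = transpose_mat Q * P" unfolding M_def
    by (subst transpose_mult[OF PT Q]) simp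
  have Mij: "M $$ (i,j) = G i j" if "i < n" "j < n" for i j
    using that P Q unfolding M_def G_def by (auto simp: scalar_prod_def atLeast0LessThan intro!: sum.cong)
  have "M * transpose_mat M = transpose_mat P * (Q * transpose_mat Q) * P"
    unfolding MT unfolding M_def using P Q PT QT by (simp add: assoc_mult_mat[of _ n n _ n _ n])
  also have "\<dots> = 1\<^sub>m n" unfolding QQT using P PT PP by simp
  finally have MMT: "M * transpose_mat M = 1\<^sub>m n" .
  have "transpose_mat M * M = transpose_mat Q * (P * transpose_mat P) * Q"
    unfolding MT unfolding M_def using P Q PT QT by (simp add: assoc_mult_mat[of _ n n _ n _ n])
  also have "\<dots> = 1\<^sub>m n" unfolding PPT using Q QT QQ by simp
  finally have MTM: "transpose_mat M * M = 1\<^sub>m n" .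
  show "\<forall>i<n. (\<Sum>j<n. (G i j)^2) = 1"
  proof (intro allI impI)
    fix i assume i: "i < n"
    have "(M * transpose_mat M) $$ (i,i) = (\<Sum>j<n. M $$ (i,j) * M $$ (i,j))"
      using i M by (auto simp: scalar_prod_def atLeast0LessThan intro!: sum.cong)
    also have "\<dots> = (\<Sum>j<n. (G i j)^2)" using i Mij by (auto simp: power2_eq_square intro!: sum.cong)
    finally show "(\<Sum>j<n. (G i j)^2) = 1" unfolding MMT using i by simp
  qed
  show "\<forall>j<n. (\<Sum>i<n. (G i j)^2) = 1"
  proof (intro allI impI)
    fix j assume j: "j < n"
    have "(transpose_mat M * M) $$ (j,j) = (\<Sum>i<n. M $$ (i,j) * M $$ (i,j))"
      using j M by (auto simp: scalar_prod_def atLeast0LessThan intro!: sum.cong)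
    also have "\<dots> = (\<Sum>i<n. (G i j)^2)" using j Mij by (auto simp: power2_eq_square intro!: sum.cong)
    finally show "(\<Sum>i<n. (G i j)^2) = 1" unfolding MTM using j by simp
  qed
qed

lemma prod_list_upt: "prod_list (map f [0..<n]) = (\<Prod>i<n. f i)"
  by (induction n) auto

lemma eig_decomp:
  assumes "A \<in> sym_mats n" "eigenvalue_vector A lam"
  shows "\<exists>P. P \<in> carrier_mat n n \<and> transpose_mat P * P = 1\<^sub>m n \<and>
     (\<forall>a<n. \<forall>b<n. A $$ (a,b) = (\<Sum>i<n. P $$ (a,i) * lam $ i * P $$ (b,i)))"
proof -
  have A: "A \<in> carrier_mat n n" and sym: "transpose_mat A = A" using assms(1) unfolding sym_mats_def by auto
  have dl: "dim_vec lam = n" and cp: "char_poly A = (\<Prod>i<n. [:- (lam $ i), 1:])"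
    using assms(2) A unfolding eigenvalue_vector_def by auto
  define es where "es = map (\<lambda>i. lam $ i) [0..<n]"
  have "char_poly A = (\<Prod>e\<leftarrow>es. [:-e,1:])" unfolding cp es_def map_map o_def prod_list_upt ..
  from spectral[OF A sym this] obtain P where P: "P \<in> carrier_mat n n" and PP: "transpose_mat P * P = 1\<^sub>m n"
    and D: "\<forall>i<n. \<forall>j<n. (transpose_mat P * A * P) $$ (i,j) = (if i = j then es!i else 0)" by blast
  have D': "\<forall>i<n. \<forall>j<n. (transpose_mat P * A * P) $$ (i,j) = (if i = j then lam $ i else 0)"
    using D unfolding es_def by auto
  show ?thesis using decomp_entry[OF A P PP D'] P PP by blast
qed

theorem proposition2p1:
  fixes n k :: nat and A B :: "real mat" and lam mu :: "real vec"
  assumes "1 \<le> k" and "k \<le> n"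
    and "A \<in> sym_mats n" and "B \<in> sym_mats n"
    and "eigenvalue_vector A lam" and "eigenvalue_vector B mu"
    and "lam \<in> Gamma n k" and "mu \<in> Gamma_dual n k"
  shows "rho k lam * rho_dual k mu \<le> mat_dot A B / real n"
proof -
  from eig_decomp[OF assms(3,5)] obtain P where P: "P \<in> carrier_mat n n"
    and PP: "transpose_mat P * P = 1\<^sub>m n"
    and Ae: "\<forall>a<n. \<forall>b<n. A $$ (a,b) = (\<Sum>i<n. P $$ (a,i) * lam $ i * P $$ (b,i))" by blast
  from eig_decomp[OF assms(4,6)] obtain Q where Q: "Q \<in> carrier_mat n n"
    and QQ: "transpose_mat Q * Q = 1\<^sub>m n"
    and Be: "\<forall>a<n. \<forall>b<n. B $$ (a,b) = (\<Sum>j<n. Q $$ (a,j) * mu $ j * Q $$ (b,j))" by blast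
  have A: "A \<in> carrier_mat n n" using assms(3) unfolding sym_mats_def by auto
  define G where "G = (\<lambda>i j. (\<Sum>k<n. P $$ (k,i) * Q $$ (k,j)))"
  have md: "mat_dot A B = (\<Sum>i<n. \<Sum>j<n. (G i j)^2 * lam $ i * mu $ j)"
  proof -
    have "mat_dot A B = (\<Sum>a<n. \<Sum>b<n. (\<Sum>i<n. P $$ (a,i) * lam $ i * P $$ (b,i)) * (\<Sum>j<n. Q $$ (a,j) * mu $ j * Q $$ (b,j)))"
      unfolding mat_dot_def using A Ae Be by (auto intro!: sum.cong)
    also have "\<dots> = (\<Sum>a<n. \<Sum>b<n. \<Sum>i<n. \<Sum>j<n. (P $$ (a,i) * lam $ i * P $$ (b,i)) * (Q $$ (a,j) * mu $ j * Q $$ (b,j)))"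
      by (simp add: sum_product)
    also have "\<dots> = (\<Sum>i<n. \<Sum>j<n. \<Sum>a<n. \<Sum>b<n. (P $$ (a,i) * lam $ i * P $$ (b,i)) * (Q $$ (a,j) * mu $ j * Q $$ (b,j)))"
      by (rule sum4_swap)
    also have "\<dots> = (\<Sum>i<n. \<Sum>j<n. (G i j)^2 * lam $ i * mu $ j)"
    proof (intro sum.cong refl)
      fix i j
      have "(G i j)^2 * lam $ i * mu $ j = lam $ i * mu $ j * (G i j * G i j)" by (simp add: power2_eq_square mult_ac)
      also have "\<dots> = lam $ i * mu $ j * (\<Sum>a<n. \<Sum>b<n. (P $$ (a,i) * Q $$ (a,j)) * (P $$ (b,i) * Q $$ (b,j)))"
        unfolding G_def sum_product ..
      also have "\<dots> = (\<Sum>a<n. \<Sum>b<n. lam $ i * mu $ j * ((P $$ (a,i) * Q $$ (a,j)) * (P $$ (b,i) * Q $$ (b,j))))"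
        by (simp add: sum_distrib_left)
      also have "\<dots> = (\<Sum>a<n. \<Sum>b<n. (P $$ (a,i) * lam $ i * P $$ (b,i)) * (Q $$ (a,j) * mu $ j * Q $$ (b,j)))"
        by (intro sum.cong refl) (simp add: mult_ac)
      finally show "(\<Sum>a<n. \<Sum>b<n. (P $$ (a,i) * lam $ i * P $$ (b,i)) * (Q $$ (a,j) * mu $ j * Q $$ (b,j)))
          = (G i j)^2 * lam $ i * mu $ j" by simp
    qed
    finally show ?thesis .
  qed
  have ds1: "\<forall>i<n. (\<Sum>j<n. (G i j)^2) = 1" using orth_rows(1)[OF P PP Q QQ] unfolding G_def .
  have ds2: "\<forall>j<n. (\<Sum>i<n. (G i j)^2) = 1" using orth_rows(2)[OF P PP Q QQ] unfolding G_def .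
  have "\<exists>\<sigma>. bij_betw \<sigma> {..<n} {..<n} \<and> (\<Sum>i\<in>{..<n}. lam $ i * mu $ (\<sigma> i))
      \<le> (\<Sum>i\<in>{..<n}. \<Sum>j\<in>{..<n}. (G i j)^2 * lam $ i * mu $ j)"
    by (rule assign_lb) (use ds1 ds2 in auto)
  then obtain \<sigma> where sig: "bij_betw \<sigma> {..<n} {..<n}"
    and le: "(\<Sum>i<n. lam $ i * mu $ (\<sigma> i)) \<le> mat_dot A B" unfolding md by blast
  have sig': "bij_betw \<sigma> {0..<n} {0..<n}" using sig by (simp add: atLeast0LessThan)
  have "real n * rho_dual k mu * rho k lam \<le> mat_dot A B"
    using perm_bound[OF assms(1,2,7,8) sig'] le by linarith
  moreover have "real n > 0" using assms(1,2) by simp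
  ultimately show ?thesis by (simp add: pos_le_divide_eq mult_ac)
qed

end
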